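(* Let $\mathcal{G}\subseteq C(\mathbb{R},\mathbb{R})$ be nonempty. The following conditions are equivalent: (1) $\mathcal{K}_\mathcal{G}\subseteq\{\mathrm{CL}(E):E\in\mathrm{CL}(\mathbb{R})\}$; (2) there exist $h_1,h_2\in C(\mathbb{R},\mathbb{R}^* )$ such that $\mathcal{G}=\{g\in C(\mathbb{R},\mathbb{R}):h_1\le g\le h_2\}$.
   Context: $\mathbb{R}^*=\mathbb{R}\cup\{-\infty,\infty\}$ with its usual order topology; $C(\mathbb{R},\mathbb{R}^* )$ is the set of continuous functions $\mathbb{R}\to\mathbb{R}^*$, and $h\le g$ means $h(x)\le g(x)$ for all $x\in\mathbb{R}$. For a closed set $E\subseteq\mathbb{R}$, $\mathrm{CL}(E)$ denotes the family of all closed subsets of $E$. For $\mathcal{G}\subseteq C(\mathbb{R},\mathbb{R})$ let $R_\mathcal{G}=\{(f,E)\in C(\mathbb{R},\mathbb{R})\times\mathrm{CL}(\mathbb{R}):(\exists g\in\mathcal{G})\, f\restriction E=g\restriction E\}$; for $\mathcal{F}\subseteq C(\mathbb{R},\mathbb{R})$ put $E_\mathcal{G}(\mathcal{F})=\{E\in\mathrm{CL}(\mathbb{R}):(\forall f\in\mathcal{F})\,(f,E)\in R_\mathcal{G}\}$, and let $\mathcal{K}_\mathcal{G}=\{E_\mathcal{G}(\mathcal{F}):\mathcal{F}\subseteq C(\mathbb{R},\mathbb{R})\}$. *)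

theory Defs
  imports "HOL-Analysis.Analysis" "HOL-Library.Extended_Real"
begin

definition Creal :: "(real \<Rightarrow> real) set" where
  "Creal = {f. continuous_on UNIV f}"

definition CL :: "real set \<Rightarrow> real set set" where
  "CL E = {A. closed A \<and> A \<subseteq> E}"

definition RG :: "(real \<Rightarrow> real) set \<Rightarrow> ((real \<Rightarrow> real) \<times> real set) set" where
  "RG G = {(f, E). f \<in> Creal \<and> E \<in> CL UNIV \<and> (\<exists>g\<in>G. \<forall>x\<in>E. f x = g x)}"

definition EG :: "(real \<Rightarrow> real) set \<Rightarrow> (real \<Rightarrow> real) set \<Rightarrow> real set set" where
  "EG G F = {E \<in> CL UNIV. \<forall>f\<in>F. (f, E) \<in> RG G}"

definition KG :: "(real \<Rightarrow> real) set \<Rightarrow> real set set set" where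
  "KG G = {EG G F | F. F \<subseteq> Creal}"

end

theory Submission
  imports Defs
begin

definition Vv :: "(real \<Rightarrow> real) set \<Rightarrow> real \<Rightarrow> real set" where
  "Vv G x = (\<lambda>g. g x) ` G"

definition PP :: "(real \<Rightarrow> real) set \<Rightarrow> bool" where
  "PP G \<longleftrightarrow> (\<forall>f\<in>Creal. closed {x. f x \<in> Vv G x} \<and> (\<exists>g\<in>G. \<forall>x. f x \<in> Vv G x \<longrightarrow> f x = g x))"

definition H2 :: "(real \<Rightarrow> real) set \<Rightarrow> real \<Rightarrow> ereal" where
  "H2 G x = (SUP g\<in>G. ereal (g x))"

lemma ev_notin:
  fixes x :: real
  assumes "closed S" "x \<notin> S"
  shows "eventually (\<lambda>y. y \<notin> S) (at x within A)"
  unfolding eventually_at_topological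
  using assms by (intro exI[of _ "- S"]) (auto simp: open_Compl)

lemma closed_ev:
  fixes x :: real
  assumes "closed S" "eventually (\<lambda>y. y \<in> S) (at x)"
  shows "x \<in> S"
proof (rule ccontr)
  assume "x \<notin> S"
  then have "eventually (\<lambda>y. y \<notin> S) (at x)" using ev_notin assms(1) by blast
  with assms(2) have "eventually (\<lambda>y. False) (at x)"
    by eventually_elim auto
  then show False by (simp add: trivial_limit_at)
qed

lemma PP_const:
  assumes "PP G" shows "closed {y. c \<in> Vv G y}"
  using assms unfolding PP_def Creal_def by (auto dest: bspec[of _ _ "\<lambda>_. c"])

lemma Creal_tendsto:
  assumes "g \<in> Creal" shows "(g \<longlongrightarrow> g x) (at x within A)"
proof -
  have "isCont g x" using assms by (simp add: Creal_def continuous_on_eq_continuous_at)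
  then show ?thesis by (metis isCont_def tendsto_within_subset subset_UNIV)
qed

lemma conv:
  assumes GC: "G \<subseteq> Creal" and P: "PP G" and a: "a \<in> Vv G x" and b: "b \<in> Vv G x"
    and ac: "a < c" and cb: "c < b"
  shows "c \<in> Vv G x"
proof (rule ccontr)
  assume nx: "c \<notin> Vv G x"
  let ?S = "{y. c \<in> Vv G y}"
  have cl: "closed ?S" using PP_const[OF P] .
  have "open (- ?S)" using cl by (simp add: open_Compl)
  moreover have "x \<in> - ?S" using nx by simp
  ultimately obtain d where d: "d > 0" "ball x d \<subseteq> - ?S"
    using open_contains_ball by blast
  obtain g1 where g1: "g1 \<in> G" "g1 x = a" using a by (auto simp: Vv_def)
  obtain g2 where g2: "g2 \<in> G" "g2 x = b" using b by (auto simp: Vv_def)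
  have c1: "continuous_on UNIV g1" "continuous_on UNIV g2" using g1 g2 GC by (auto simp: Creal_def)
  obtain e1 where e1: "e1 > 0" "\<forall>y. dist y x < e1 \<longrightarrow> dist (g1 y) (g1 x) < c - a"
    using c1(1) ac unfolding continuous_on_iff by (metis UNIV_I diff_gt_0_iff_gt)
  obtain e2 where e2: "e2 > 0" "\<forall>y. dist y x < e2 \<longrightarrow> dist (g2 y) (g2 x) < b - c"
    using c1(2) cb unfolding continuous_on_iff by (metis UNIV_I diff_gt_0_iff_gt)
  define \<epsilon> where "\<epsilon> = min d (min e1 e2) / 2"
  have ep: "\<epsilon> > 0" "\<epsilon> < d" "\<epsilon> < e1" "\<epsilon> < e2" using d e1 e2 by (auto simp: \<epsilon>_def)
  define t where "t y = max 0 (min 1 ((y - (x - \<epsilon>)) / (2*\<epsilon>)))" for y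
  define f where "f y = g1 y + t y * (g2 y - g1 y)" for y
  have "continuous_on UNIV f" unfolding f_def[abs_def] t_def
    using ep by (intro continuous_intros c1) auto
  then have fC: "f \<in> Creal" by (simp add: Creal_def)
  have t0: "t (x - \<epsilon>) = 0" by (simp add: t_def)
  have t1: "t (x + \<epsilon>) = 1" using ep by (simp add: t_def)
  obtain g where g: "g \<in> G" "\<forall>y. f y \<in> Vv G y \<longrightarrow> f y = g y"
    using P fC unfolding PP_def by blast
  have "f (x - \<epsilon>) = g1 (x - \<epsilon>)" using t0 by (simp add: f_def)
  moreover have "g1 (x - \<epsilon>) \<in> Vv G (x - \<epsilon>)" using g1 by (simp add: Vv_def)
  ultimately have "g (x - \<epsilon>) = g1 (x - \<epsilon>)" using g by auto
  moreover have "g1 (x - \<epsilon>) < c"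
  proof -
    have "\<bar>g1 (x - \<epsilon>) - g1 x\<bar> < c - a" using e1(2)[rule_format, of "x - \<epsilon>"] ep g1
      by (simp add: dist_real_def)
    then show ?thesis using g1 by linarith
  qed
  ultimately have L: "g (x - \<epsilon>) \<le> c" by simp
  have "f (x + \<epsilon>) = g2 (x + \<epsilon>)" using t1 by (simp add: f_def)
  moreover have "g2 (x + \<epsilon>) \<in> Vv G (x + \<epsilon>)" using g2 by (simp add: Vv_def)
  ultimately have "g (x + \<epsilon>) = g2 (x + \<epsilon>)" using g by auto
  moreover have "g2 (x + \<epsilon>) > c"
  proof -
    have "\<bar>g2 (x + \<epsilon>) - g2 x\<bar> < b - c" using e2(2)[rule_format, of "x + \<epsilon>"] ep g2
      by (simp add: dist_real_def)
    then show ?thesis using g2 by linarith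
  qed
  ultimately have R: "c \<le> g (x + \<epsilon>)" by simp
  have "continuous_on {x - \<epsilon> .. x + \<epsilon>} g"
    using g GC by (auto simp: Creal_def intro: continuous_on_subset)
  then obtain z where z: "x - \<epsilon> \<le> z" "z \<le> x + \<epsilon>" "g z = c"
    using IVT'[of g "x - \<epsilon>" c "x + \<epsilon>"] L R ep by auto
  have "c \<in> Vv G z" using z g by (auto simp: Vv_def)
  moreover have "z \<in> ball x d" using z ep by (auto simp: dist_real_def)
  ultimately show False using d by auto
qed


lemma H2_ge:
  assumes "g \<in> G" shows "ereal (g x) \<le> H2 G x"
  unfolding H2_def using assms by (rule SUP_upper)

lemma H2_cont:
  assumes GC: "G \<subseteq> Creal" and ne: "G \<noteq> {}" and P: "PP G"
  shows "continuous_on UNIV (H2 G)"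
  unfolding continuous_on_def
proof (intro ballI order_tendstoI)
  fix x :: real and a assume "a < H2 G x"
  then obtain g where g: "g \<in> G" "a < ereal (g x)" unfolding H2_def less_SUP_iff by blast
  have "((\<lambda>y. ereal (g y)) \<longlongrightarrow> ereal (g x)) (at x within UNIV)"
    using Creal_tendsto g(1) GC by (intro tendsto_ereal) blast
  then have "eventually (\<lambda>y. a < ereal (g y)) (at x within UNIV)"
    using g(2) order_tendstoD(1) by blast
  then show "eventually (\<lambda>y. a < H2 G y) (at x within UNIV)"
    by eventually_elim (meson H2_ge g(1) less_le_trans)
next
  fix x :: real and b assume hb: "H2 G x < b"
  obtain t where t: "H2 G x < ereal t" "ereal t < b" using ereal_dense2[OF hb] by blast
  obtain g0 where g0: "g0 \<in> G" using ne by blast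
  have "ereal (g0 x) < ereal t" using H2_ge[OF g0, of x] t(1) by (meson le_less_trans)
  then have "g0 x < t" by simp
  moreover have "(g0 \<longlongrightarrow> g0 x) (at x within UNIV)" using Creal_tendsto g0 GC by blast
  ultimately have ev1: "eventually (\<lambda>y. g0 y < t) (at x within UNIV)"
    using order_tendstoD(2) by blast
  let ?S = "{y. t \<in> Vv G y}"
  have cl: "closed ?S" using PP_const[OF P] .
  have "x \<notin> ?S"
  proof
    assume "x \<in> ?S"
    then obtain g where "g \<in> G" "g x = t" by (auto simp: Vv_def)
    then have "ereal t \<le> H2 G x" using H2_ge by metis
    then show False using t(1) by simp
  qed
  then have ev2: "eventually (\<lambda>y. y \<notin> ?S) (at x within UNIV)" using ev_notin cl by blast
  show "eventually (\<lambda>y. H2 G y < b) (at x within UNIV)"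
    using ev1 ev2
  proof eventually_elim
    case (elim y)
    show ?case
    proof (rule ccontr)
      assume "\<not> H2 G y < b"
      then have "ereal t < H2 G y" using t by (meson not_less less_le_trans)
      then obtain g where g: "g \<in> G" "ereal t < ereal (g y)" unfolding H2_def less_SUP_iff by blast
      have "t \<in> Vv G y"
        by (rule conv[OF GC P, of "g0 y" y "g y" t]) (use g g0 elim in \<open>auto simp: Vv_def\<close>)
      with elim show False by simp
    qed
  qed
qed

lemma H2_attained:
  assumes GC: "G \<subseteq> Creal" and ne: "G \<noteq> {}" and P: "PP G" and hc: "H2 G x = ereal c"
  shows "c \<in> Vv G x"
proof (cases "\<exists>a\<in>Vv G x. a < c")
  case False
  obtain g0 where g0: "g0 \<in> G" using ne by blast
  have "ereal (g0 x) \<le> ereal c" using H2_ge[OF g0, of x] hc by simp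
  moreover have "g0 x \<in> Vv G x" using g0 by (simp add: Vv_def)
  ultimately have "g0 x = c" using False by force
  then show ?thesis using \<open>g0 x \<in> Vv G x\<close> by simp
next
  case True
  then obtain g0 where g0: "g0 \<in> G" "g0 x < c" by (auto simp: Vv_def)
  define m where "m y = min (H2 G y) (ereal c)" for y
  define f where "f y = min c (real_of_ereal (m y) - \<bar>y - x\<bar>)" for y
  have fin: "\<bar>m y\<bar> \<noteq> \<infinity>" for y
  proof -
    have "ereal (g0 y) \<le> H2 G y" by (rule H2_ge[OF g0(1)])
    then have "min (ereal (g0 y)) (ereal c) \<le> m y" unfolding m_def by (rule min.mono) simp
    moreover have "ereal (min (g0 y) c) \<le> min (ereal (g0 y)) (ereal c)"
      by (cases "g0 y \<le> c") (auto simp: min_def)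
    ultimately have lb: "ereal (min (g0 y) c) \<le> m y" by (rule order_trans[rotated])
    have ub: "m y \<le> ereal c" by (simp add: m_def)
    obtain r where "ereal r \<le> m y" using lb by blast
    then show ?thesis using ub by (cases "m y") auto
  qed
  have mer: "ereal (real_of_ereal (m y)) = m y" for y using fin[of y] by (simp add: ereal_real')
  have "continuous_on UNIV m" unfolding m_def[abs_def]
    by (intro continuous_intros H2_cont[OF GC ne P])
  then have "continuous_on UNIV (real_of_ereal \<circ> m)"
    using continuous_on_iff_real[of UNIV m, OF fin] by blast
  then have fc: "continuous_on UNIV f" unfolding f_def[abs_def] o_def
    by (intro continuous_intros)
  then have fC: "f \<in> Creal" by (simp add: Creal_def)
  have mx: "m x = ereal c" using hc by (simp add: m_def)
  have fx: "f x = c" using mx by (simp add: f_def)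
  have "(f \<longlongrightarrow> c) (at x)" using Creal_tendsto[OF fC, of x UNIV] fx by simp
  moreover have "(g0 \<longlongrightarrow> g0 x) (at x)" using Creal_tendsto[of g0 x UNIV] g0 GC by blast
  ultimately have "((\<lambda>y. f y - g0 y) \<longlongrightarrow> c - g0 x) (at x)" by (intro tendsto_intros)
  then have ev1: "eventually (\<lambda>y. 0 < f y - g0 y) (at x)"
    using g0(2) order_tendstoD(1)[of "\<lambda>y. f y - g0 y" "c - g0 x" "at x" 0] by simp
  have ev2: "eventually (\<lambda>y. y \<noteq> x) (at x)" by (simp add: eventually_at_filter)
  have "eventually (\<lambda>y. y \<in> {y. f y \<in> Vv G y}) (at x)"
    using ev1 ev2
  proof eventually_elim
    case (elim y)
    have "f y < real_of_ereal (m y)" using elim by (simp add: f_def)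
    then have "ereal (f y) < ereal (real_of_ereal (m y))" by simp
    then have "ereal (f y) < m y" using mer[of y] by simp
    then have "ereal (f y) < H2 G y" by (simp add: m_def)
    then obtain g where g: "g \<in> G" "ereal (f y) < ereal (g y)" unfolding H2_def less_SUP_iff by blast
    have "f y \<in> Vv G y"
      by (rule conv[OF GC P, of "g0 y" y "g y" "f y"]) (use g g0 elim in \<open>auto simp: Vv_def\<close>)
    then show ?case by simp
  qed
  moreover have "closed {y. f y \<in> Vv G y}" using P fC by (simp add: PP_def)
  ultimately have "x \<in> {y. f y \<in> Vv G y}" using closed_ev by blast
  then show ?thesis using fx by simp
qed


lemma K_imp_PP:
  assumes K: "KG G \<subseteq> {CL E | E. E \<in> CL UNIV}"
  shows "PP G"
  unfolding PP_def
proof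
  fix f assume fC: "f \<in> Creal"
  have "EG G {f} \<in> KG G" unfolding KG_def mem_Collect_eq using fC
  proof (intro exI conjI)
    show "EG G {f} = EG G {f}" by (rule refl)
    show "{f} \<subseteq> Creal" using fC by simp
  qed
  then have "EG G {f} \<in> {CL E | E. E \<in> CL UNIV}" using K by (rule subsetD[rotated])
  then obtain E where E: "EG G {f} = CL E" "E \<in> CL UNIV" unfolding mem_Collect_eq by blast
  have clE: "closed E" using E(2) by (simp add: CL_def)
  have "E \<in> CL E" using clE by (simp add: CL_def)
  then have "E \<in> EG G {f}" using E(1) by simp
  then have "(f, E) \<in> RG G" unfolding EG_def by blast
  then have "\<exists>g\<in>G. \<forall>x\<in>E. f x = g x" by (simp add: RG_def)
  then obtain g where g: "g \<in> G" "\<forall>x\<in>E. f x = g x" by blast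
  have eq: "E = {x. f x \<in> Vv G x}"
  proof
    show "E \<subseteq> {x. f x \<in> Vv G x}" using g by (auto simp: Vv_def)
  next
    show "{x. f x \<in> Vv G x} \<subseteq> E"
    proof
      fix x assume "x \<in> {x. f x \<in> Vv G x}"
      then obtain g' where g': "g' \<in> G" "f x = g' x" by (auto simp: Vv_def)
      have "{x} \<in> EG G {f}" using fC g' by (auto simp: EG_def RG_def CL_def)
      then have "{x} \<in> CL E" using E(1) by simp
      then show "x \<in> E" by (simp add: CL_def)
    qed
  qed
  show "closed {x. f x \<in> Vv G x} \<and> (\<exists>g\<in>G. \<forall>x. f x \<in> Vv G x \<longrightarrow> f x = g x)"
  proof
    show "closed {x. f x \<in> Vv G x}" using clE eq by simp
    have "\<forall>x. f x \<in> Vv G x \<longrightarrow> f x = g x" using g(2) eq by blast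
    then show "\<exists>g\<in>G. \<forall>x. f x \<in> Vv G x \<longrightarrow> f x = g x" using g(1) by blast
  qed
qed

lemma Vv_neg: "c \<in> Vv ((\<lambda>g y. - g y) ` G) x \<longleftrightarrow> - c \<in> Vv G x"
proof
  assume "c \<in> Vv ((\<lambda>g y. - g y) ` G) x"
  then obtain g where "g \<in> G" "c = - g x" unfolding Vv_def by auto
  then show "- c \<in> Vv G x" unfolding Vv_def by auto
next
  assume "- c \<in> Vv G x"
  then obtain g where g: "g \<in> G" "- c = g x" unfolding Vv_def by auto
  then have "(\<lambda>y. - g y) \<in> (\<lambda>g y. - g y) ` G" by blast
  moreover have "c = (\<lambda>y. - g y) x" using g by simp
  show "c \<in> Vv ((\<lambda>g y. - g y) ` G) x" unfolding Vv_def image_image using g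
    by (intro image_eqI[where x=g]) simp_all
qed

lemma PP_neg:
  assumes P: "PP G" shows "PP ((\<lambda>g y. - g y) ` G)"
  unfolding PP_def
proof
  fix f assume fC: "f \<in> Creal"
  have "continuous_on UNIV (\<lambda>y. - f y)" using fC unfolding Creal_def mem_Collect_eq
    by (rule continuous_on_minus)
  then have "(\<lambda>y. - f y) \<in> Creal" by (simp add: Creal_def)
  then have c: "closed {x. - f x \<in> Vv G x}" and "\<exists>g\<in>G. \<forall>x. - f x \<in> Vv G x \<longrightarrow> - f x = g x"
    using P unfolding PP_def by auto
  then obtain g where g: "g \<in> G" "\<forall>x. - f x \<in> Vv G x \<longrightarrow> - f x = g x" by blast
  show "closed {x. f x \<in> Vv ((\<lambda>g y. - g y) ` G) x} \<and>
        (\<exists>g\<in>(\<lambda>g y. - g y) ` G. \<forall>x. f x \<in> Vv ((\<lambda>g y. - g y) ` G) x \<longrightarrow> f x = g x)"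
  proof
    show "closed {x. f x \<in> Vv ((\<lambda>g y. - g y) ` G) x}" using c by (simp only: Vv_neg)
    show "\<exists>g\<in>(\<lambda>g y. - g y) ` G. \<forall>x. f x \<in> Vv ((\<lambda>g y. - g y) ` G) x \<longrightarrow> f x = g x"
    proof (rule bexI[of _ "\<lambda>y. - g y"])
      show "(\<lambda>y. - g y) \<in> (\<lambda>g y. - g y) ` G" using g(1) by (rule imageI)
      show "\<forall>x. f x \<in> Vv ((\<lambda>g y. - g y) ` G) x \<longrightarrow> f x = - g x"
      proof (intro allI impI)
        fix x assume "f x \<in> Vv ((\<lambda>g y. - g y) ` G) x"
        then have "- f x \<in> Vv G x" by (simp only: Vv_neg)
        then have "- f x = g x" using g(2) by blast
        then show "f x = - g x" by simp
      qed
    qed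
  qed
qed

lemma fin_between:
  fixes z :: ereal
  assumes "min (ereal a) (ereal b) \<le> z" "z \<le> max (ereal a) (ereal b)"
  shows "\<bar>z\<bar> \<noteq> \<infinity>"
proof -
  have "ereal (min a b) \<le> z" using assms(1) by (metis min_def ereal_less_eq(3))
  moreover have "z \<le> ereal (max a b)" using assms(2) by (metis max_def ereal_less_eq(3))
  ultimately obtain r s where "ereal r \<le> z" "z \<le> ereal s" by blast
  then show ?thesis by (cases z) auto
qed

lemma clamp:
  fixes h1 h2 :: "real \<Rightarrow> ereal"
  assumes c1: "continuous_on UNIV h1" and c2: "continuous_on UNIV h2"
    and b1: "\<And>x. h1 x \<le> ereal (g0 x)" and b2: "\<And>x. ereal (g0 x) \<le> h2 x"
    and fC: "f \<in> Creal"
  shows "\<exists>g\<in>Creal. (\<forall>x. h1 x \<le> ereal (g x) \<and> ereal (g x) \<le> h2 x) \<and>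
           (\<forall>x. h1 x \<le> ereal (f x) \<and> ereal (f x) \<le> h2 x \<longrightarrow> g x = f x)"
proof -
  define e where "e x = max (h1 x) (min (h2 x) (ereal (f x)))" for x
  have fin: "\<bar>e x\<bar> \<noteq> \<infinity>" for x
  proof (rule fin_between[of "g0 x" "f x"])
    have "min (ereal (g0 x)) (ereal (f x)) \<le> min (h2 x) (ereal (f x))"
      by (rule min.mono[OF b2 order_refl])
    also have "\<dots> \<le> e x" unfolding e_def by (rule max.cobounded2)
    finally show "min (ereal (g0 x)) (ereal (f x)) \<le> e x" .
    have "e x \<le> max (ereal (g0 x)) (min (h2 x) (ereal (f x)))"
      unfolding e_def by (rule max.mono[OF b1 order_refl])
    also have "\<dots> \<le> max (ereal (g0 x)) (ereal (f x))"
      by (rule max.mono[OF order_refl min.cobounded2])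
    finally show "e x \<le> max (ereal (g0 x)) (ereal (f x))" .
  qed
  have "continuous_on UNIV (\<lambda>x. ereal (f x))" using fC by (auto simp: Creal_def intro: continuous_on_ereal)
  then have "continuous_on UNIV e" unfolding e_def[abs_def]
    by (intro continuous_on_max continuous_on_min c1 c2)
  then have "continuous_on UNIV (real_of_ereal \<circ> e)"
    using continuous_on_iff_real[of UNIV e, OF fin] by blast
  then have gC: "(\<lambda>x. real_of_ereal (e x)) \<in> Creal" by (simp add: Creal_def o_def)
  have er: "ereal (real_of_ereal (e x)) = e x" for x using fin[of x] by (simp add: ereal_real')
  have h12: "h1 x \<le> h2 x" for x using b1[of x] b2[of x] by (rule order_trans)
  have "h1 x \<le> e x \<and> e x \<le> h2 x" for x
  proof
    show "h1 x \<le> e x" unfolding e_def by (rule max.cobounded1)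
    show "e x \<le> h2 x" unfolding e_def by (rule max.boundedI[OF h12 min.cobounded1])
  qed
  moreover have "e x = ereal (f x)" if "h1 x \<le> ereal (f x)" "ereal (f x) \<le> h2 x" for x
    unfolding e_def using that by (simp add: min.absorb2 max.absorb2)
  ultimately show ?thesis using gC er
    by (intro bexI[of _ "\<lambda>x. real_of_ereal (e x)"]) auto
qed

theorem theorem3p3:
  fixes G :: "(real \<Rightarrow> real) set"
  assumes "G \<subseteq> Creal" and "G \<noteq> {}"
  shows "KG G \<subseteq> {CL E | E. E \<in> CL UNIV} \<longleftrightarrow>
    (\<exists>h1 h2 :: real \<Rightarrow> ereal. continuous_on UNIV h1 \<and> continuous_on UNIV h2 \<and>
       G = {g \<in> Creal. (\<forall>x. h1 x \<le> ereal (g x)) \<and> (\<forall>x. ereal (g x) \<le> h2 x)})"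
proof
  assume K: "KG G \<subseteq> {CL E | E. E \<in> CL UNIV}"
  have GC: "G \<subseteq> Creal" and ne: "G \<noteq> {}" using assms by auto
  have P: "PP G" using K_imp_PP[OF K] .
  define G' where "G' = (\<lambda>g y. - g y) ` G"
  have GC': "G' \<subseteq> Creal"
  proof
    fix g' assume "g' \<in> G'"
    then obtain g where g: "g \<in> G" "g' = (\<lambda>y. - g y)" by (auto simp: G'_def)
    have "continuous_on UNIV (\<lambda>y. - g y)" using g(1) GC unfolding Creal_def
      by (intro continuous_on_minus) blast
    then show "g' \<in> Creal" using g(2) by (simp add: Creal_def)
  qed
  have ne': "G' \<noteq> {}" using ne by (simp add: G'_def)
  have P': "PP G'" using PP_neg[OF P] by (simp add: G'_def)
  define h1 where "h1 x = - H2 G' x" for x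
  have c1: "continuous_on UNIV h1" unfolding h1_def[abs_def]
    using continuous_on_compose2[OF continuous_uminus_ereal H2_cont[OF GC' ne' P'], of UNIV]
    by simp
  have c2: "continuous_on UNIV (H2 G)" using H2_cont[OF GC ne P] .
  have h1le: "h1 x \<le> ereal (g x)" if "g \<in> G" for g x
  proof -
    have "(\<lambda>y. - g y) \<in> G'" using that by (simp add: G'_def)
    then have "ereal (- g x) \<le> H2 G' x" using H2_ge by metis
    then show ?thesis unfolding h1_def by (metis ereal_uminus_le_reorder uminus_ereal.simps(1))
  qed
  have "G = {g \<in> Creal. (\<forall>x. h1 x \<le> ereal (g x)) \<and> (\<forall>x. ereal (g x) \<le> H2 G x)}"
  proof
    show "G \<subseteq> {g \<in> Creal. (\<forall>x. h1 x \<le> ereal (g x)) \<and> (\<forall>x. ereal (g x) \<le> H2 G x)}"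
      using GC h1le H2_ge by blast
  next
    show "{g \<in> Creal. (\<forall>x. h1 x \<le> ereal (g x)) \<and> (\<forall>x. ereal (g x) \<le> H2 G x)} \<subseteq> G"
    proof
      fix g assume "g \<in> {g \<in> Creal. (\<forall>x. h1 x \<le> ereal (g x)) \<and> (\<forall>x. ereal (g x) \<le> H2 G x)}"
      then have gC: "g \<in> Creal" and lo: "\<And>x. h1 x \<le> ereal (g x)" and hi: "\<And>x. ereal (g x) \<le> H2 G x"
        by auto
      have inV: "g x \<in> Vv G x" for x
      proof (cases "ereal (g x) = H2 G x")
        case True then show ?thesis using H2_attained[OF GC ne P] by metis
      next
        case F1: False
        show ?thesis
        proof (cases "ereal (- g x) = H2 G' x")
          case True
          then have "- g x \<in> Vv G' x" using H2_attained[OF GC' ne' P'] by metis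
          then show ?thesis by (simp add: G'_def Vv_neg)
        next
          case F2: False
          have "ereal (- g x) \<le> H2 G' x" using lo[of x] unfolding h1_def
            by (metis ereal_uminus_le_reorder uminus_ereal.simps(1))
          then have "ereal (- g x) < H2 G' x" using F2 by simp
          then obtain g1' where "g1' \<in> G'" "ereal (- g x) < ereal (g1' x)"
            unfolding H2_def less_SUP_iff by blast
          then obtain g1 where g1: "g1 \<in> G" "g1 x < g x" by (auto simp: G'_def)
          have "ereal (g x) < H2 G x" using hi[of x] F1 by simp
          then obtain g2 where g2: "g2 \<in> G" "ereal (g x) < ereal (g2 x)"
            unfolding H2_def less_SUP_iff by blast
          show ?thesis
            by (rule conv[OF GC P, of "g1 x" x "g2 x" "g x"]) (use g1 g2 in \<open>auto simp: Vv_def\<close>)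
        qed
      qed
      obtain g' where "g' \<in> G" "\<forall>x. g x \<in> Vv G x \<longrightarrow> g x = g' x" using P gC unfolding PP_def by blast
      then have "g = g'" using inV by auto
      then show "g \<in> G" using \<open>g' \<in> G\<close> by simp
    qed
  qed
  then show "\<exists>h1 h2 :: real \<Rightarrow> ereal. continuous_on UNIV h1 \<and> continuous_on UNIV h2 \<and>
       G = {g \<in> Creal. (\<forall>x. h1 x \<le> ereal (g x)) \<and> (\<forall>x. ereal (g x) \<le> h2 x)}"
    using c1 c2 by blast
next
  assume "\<exists>h1 h2 :: real \<Rightarrow> ereal. continuous_on UNIV h1 \<and> continuous_on UNIV h2 \<and>
       G = {g \<in> Creal. (\<forall>x. h1 x \<le> ereal (g x)) \<and> (\<forall>x. ereal (g x) \<le> h2 x)}"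
  then obtain h1 h2 :: "real \<Rightarrow> ereal" where c1: "continuous_on UNIV h1" and c2: "continuous_on UNIV h2"
    and Geq: "G = {g \<in> Creal. (\<forall>x. h1 x \<le> ereal (g x)) \<and> (\<forall>x. ereal (g x) \<le> h2 x)}" by blast
  obtain g0 where g0: "g0 \<in> G" using assms(2) by blast
  have b0: "h1 x \<le> ereal (g0 x)" "ereal (g0 x) \<le> h2 x" for x using g0 Geq by auto
  show "KG G \<subseteq> {CL E | E. E \<in> CL UNIV}"
  proof
    fix K assume "K \<in> KG G"
    then obtain F where F: "F \<subseteq> Creal" "K = EG G F" unfolding KG_def by blast
    define A where "A = {x. \<forall>f\<in>F. h1 x \<le> ereal (f x) \<and> ereal (f x) \<le> h2 x}"
    have "A = (\<Inter>f\<in>F. {x. h1 x \<le> ereal (f x)} \<inter> {x. ereal (f x) \<le> h2 x})"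
      unfolding A_def by auto
    moreover have "closed ({x. h1 x \<le> ereal (f x)} \<inter> {x. ereal (f x) \<le> h2 x})" if "f \<in> F" for f
    proof -
      have fc: "continuous_on UNIV (\<lambda>x. ereal (f x))"
        using that F(1) by (auto simp: Creal_def intro: continuous_on_ereal)
      show ?thesis
        by (intro closed_Int closed_Collect_le c1 c2 fc)
    qed
    ultimately have clA: "closed A" by auto
    have "K = CL A"
    proof
      show "K \<subseteq> CL A"
      proof
        fix E assume "E \<in> K"
        then have E: "E \<in> CL UNIV" "\<forall>f\<in>F. (f, E) \<in> RG G" using F(2) by (auto simp: EG_def)
        have "E \<subseteq> A"
        proof
          fix x assume x: "x \<in> E"
          show "x \<in> A" unfolding A_def mem_Collect_eq
          proof (intro ballI)
            fix f assume "f \<in> F"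
            then obtain g where "g \<in> G" "\<forall>x\<in>E. f x = g x" using E(2) by (auto simp: RG_def)
            then show "h1 x \<le> ereal (f x) \<and> ereal (f x) \<le> h2 x" using x Geq by auto
          qed
        qed
        then show "E \<in> CL A" using E(1) by (simp add: CL_def)
      qed
    next
      show "CL A \<subseteq> K"
      proof
        fix E assume "E \<in> CL A"
        then have E: "closed E" "E \<subseteq> A" by (auto simp: CL_def)
        have "(f, E) \<in> RG G" if fF: "f \<in> F" for f
        proof -
          have fC: "f \<in> Creal" using fF F(1) by blast
          obtain g where g: "g \<in> Creal" "\<forall>x. h1 x \<le> ereal (g x) \<and> ereal (g x) \<le> h2 x"
            "\<forall>x. h1 x \<le> ereal (f x) \<and> ereal (f x) \<le> h2 x \<longrightarrow> g x = f x"
            using clamp[OF c1 c2 b0 fC] by blast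
          have "g \<in> G" using g Geq by auto
          moreover have "\<forall>x\<in>E. f x = g x"
          proof
            fix x assume "x \<in> E"
            then have "h1 x \<le> ereal (f x)" "ereal (f x) \<le> h2 x" using E(2) fF by (auto simp: A_def)
            then show "f x = g x" using g(3) by auto
          qed
          ultimately show ?thesis using fC E(1) by (auto simp: RG_def CL_def)
        qed
        then show "E \<in> K" using F(2) E(1) by (auto simp: EG_def CL_def)
      qed
    qed
    then show "K \<in> {CL E | E. E \<in> CL UNIV}" using clA by (auto simp: CL_def)
  qed
qed

end
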